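(* Let $n\ge 1$ and $m\ge 2$ be integers with $m\nmid n$, let $\ell=\lfloor n/m\rfloor$, let $k$ be an integer with $1\le k\le \ell$, let $s=\lfloor \ell/k\rfloor$, and let $f=\theta_{m,0}+\theta_{m,k}$. Then the order of $f$ under composition is $2^{\lceil\log_2\frac{\ell+1}{k}\rceil}$, and the compositional inverse of $f$ is $$f^{-1}=\theta_{m,0}+\theta_{m,k}+\theta_{m,2k}+\cdots+\theta_{m,sk}.$$ Moreover, the algebraic degree of $f$ is $(m-1)k+1$ and the algebraic degree of $f^{-1}$ is $(m-1)sk+1$.
   Context: For $x=(x_0,\dots,x_{n-1})\in\mathbb{F}_2^n$, indices of coordinates are taken modulo $n$. For a nonnegative integer $k$, the map $\theta_{m,k}\colon\mathbb{F}_2^n\to\mathbb{F}_2^n$ is defined by $\theta_{m,k}(x)=y$ with $y_i=x_{i+mk}\prod_{1\le j\le mk-1,\ m\nmid j}(x_{i+j}+1)$ for $i\in\{0,\dots,n-1\}$; $\theta_{m,0}$ is the identity map. Sums of maps are pointwise sums. The order of $f$ is the least $r\ge1$ with $f^{r}$ (the $r$-fold composition) equal to the identity. The algebraic degree of a map $\mathbb{F}_2^n\to\mathbb{F}_2^n$ is the maximum degree of the algebraic normal forms of its coordinate functions. *)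

theory Defs
  imports Complex_Main
begin

text \<open>Vectors of F_2^n are modelled as functions nat => bool (True = 1) that vanish
  outside the index range {0..<n}.  Addition in F_2 is exclusive or, x + 1 is negation,
  products are conjunctions.\<close>

definition vecs :: "nat \<Rightarrow> (nat \<Rightarrow> bool) set" where
  "vecs n = {x. \<forall>i. n \<le> i \<longrightarrow> \<not> x i}"

definition theta :: "nat \<Rightarrow> nat \<Rightarrow> nat \<Rightarrow> (nat \<Rightarrow> bool) \<Rightarrow> (nat \<Rightarrow> bool)" where
  "theta n m k x = (\<lambda>i. i < n \<and> x ((i + m * k) mod n) \<and>
      (\<forall>j. 1 \<le> j \<and> j < m * k \<and> \<not> m dvd j \<longrightarrow> \<not> x ((i + j) mod n)))"

definition map_sum :: "'j set \<Rightarrow> ('j \<Rightarrow> (nat \<Rightarrow> bool) \<Rightarrow> (nat \<Rightarrow> bool)) \<Rightarrow>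
    (nat \<Rightarrow> bool) \<Rightarrow> (nat \<Rightarrow> bool)" where
  "map_sum J F = (\<lambda>x i. odd (card {j \<in> J. F j x i}))"

definition map_add :: "((nat \<Rightarrow> bool) \<Rightarrow> (nat \<Rightarrow> bool)) \<Rightarrow> ((nat \<Rightarrow> bool) \<Rightarrow> (nat \<Rightarrow> bool)) \<Rightarrow>
    (nat \<Rightarrow> bool) \<Rightarrow> (nat \<Rightarrow> bool)" where
  "map_add F G = (\<lambda>x i. F x i \<noteq> G x i)"

definition is_identity_power :: "nat \<Rightarrow> ((nat \<Rightarrow> bool) \<Rightarrow> (nat \<Rightarrow> bool)) \<Rightarrow> nat \<Rightarrow> bool" where
  "is_identity_power n f r \<longleftrightarrow> (\<forall>x \<in> vecs n. (f ^^ r) x = x)"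

definition map_order :: "nat \<Rightarrow> ((nat \<Rightarrow> bool) \<Rightarrow> (nat \<Rightarrow> bool)) \<Rightarrow> nat" where
  "map_order n f = (LEAST r. 1 \<le> r \<and> is_identity_power n f r)"

definition is_inverse_map :: "nat \<Rightarrow> ((nat \<Rightarrow> bool) \<Rightarrow> (nat \<Rightarrow> bool)) \<Rightarrow>
    ((nat \<Rightarrow> bool) \<Rightarrow> (nat \<Rightarrow> bool)) \<Rightarrow> bool" where
  "is_inverse_map n f g \<longleftrightarrow> (\<forall>x \<in> vecs n. f x \<in> vecs n \<and> g x \<in> vecs n \<and>
      g (f x) = x \<and> f (g x) = x)"

definition anf :: "nat \<Rightarrow> ((nat \<Rightarrow> bool) \<Rightarrow> bool) \<Rightarrow> nat set set" where
  "anf n g = (THE A. A \<subseteq> Pow {..<n} \<and>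
      (\<forall>x \<in> vecs n. g x = odd (card {S \<in> A. \<forall>i \<in> S. x i})))"

definition bool_fun_degree :: "nat \<Rightarrow> ((nat \<Rightarrow> bool) \<Rightarrow> bool) \<Rightarrow> nat" where
  "bool_fun_degree n g = Max (insert 0 (card ` anf n g))"

definition alg_degree :: "nat \<Rightarrow> ((nat \<Rightarrow> bool) \<Rightarrow> (nat \<Rightarrow> bool)) \<Rightarrow> nat" where
  "alg_degree n F = Max (insert 0 ((\<lambda>i. bool_fun_degree n (\<lambda>x. F x i)) ` {..<n}))"

end

theory Submission
  imports Defs "HOL-Computational_Algebra.Primes"
begin

definition Cc :: "nat \<Rightarrow> nat \<Rightarrow> (nat \<Rightarrow> bool) \<Rightarrow> nat \<Rightarrow> nat \<Rightarrow> bool" where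
  "Cc n m x c p = (\<forall>j. 1 \<le> j \<and> j < m * c \<and> \<not> m dvd j \<longrightarrow> \<not> x ((p + j) mod n))"

definition thU :: "nat \<Rightarrow> nat \<Rightarrow> (nat \<Rightarrow> bool) \<Rightarrow> nat \<Rightarrow> nat \<Rightarrow> bool" where
  "thU n m x c p = (x ((p + m * c) mod n) \<and> Cc n m x c p)"

lemma theta_thU: "theta n m c x i = (i < n \<and> thU n m x c i)"
  by (simp add: theta_def thU_def Cc_def)

lemma thU_mod: "thU n m x c (p mod n) = thU n m x c p"
  by (simp add: thU_def Cc_def mod_add_left_eq)

lemma thU_0: "thU n m x 0 p = x (p mod n)"
  by (simp add: thU_def Cc_def)

lemma dvd_triv: "(m::nat) dvd (d + m * b) \<longleftrightarrow> m dvd d"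
  by (simp add: dvd_add_left_iff)

lemma Cc_add: "Cc n m x (a + b) p = (Cc n m x a p \<and> Cc n m x b (p + m * a))"
proof
  assume H: "Cc n m x (a + b) p"
  show "Cc n m x a p \<and> Cc n m x b (p + m * a)"
  proof
    have "m * a \<le> m * (a + b)" by simp
    then show "Cc n m x a p" using H unfolding Cc_def
      by (meson less_le_trans)
    show "Cc n m x b (p + m * a)" unfolding Cc_def
    proof (intro allI impI)
      fix j assume j: "1 \<le> j \<and> j < m * b \<and> \<not> m dvd j"
      have "\<not> m dvd (j + m * a)" using j dvd_triv by blast
      moreover have "1 \<le> j + m * a" using j by simp
      moreover have "j + m * a < m * (a + b)" using j by (simp add: add_mult_distrib2)
      ultimately have "\<not> x ((p + (j + m * a)) mod n)" using H unfolding Cc_def by blast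
      moreover have "p + (j + m * a) = p + m * a + j" by simp
      ultimately show "\<not> x ((p + m * a + j) mod n)" by metis
    qed
  qed
next
  assume H: "Cc n m x a p \<and> Cc n m x b (p + m * a)"
  show "Cc n m x (a + b) p" unfolding Cc_def
  proof (intro allI impI)
    fix j assume j: "1 \<le> j \<and> j < m * (a + b) \<and> \<not> m dvd j"
    show "\<not> x ((p + j) mod n)"
    proof (cases "j < m * a")
      case True then show ?thesis using H j unfolding Cc_def by blast
    next
      case False
      define j' where "j' = j - m * a"
      have jj: "j = j' + m * a" using False j'_def by simp
      have "j' \<noteq> 0"
      proof
        assume "j' = 0"
        then have "m dvd j" using jj by simp
        then show False using j by simp
      qed
      moreover have "j' < m * b" using j jj by (simp add: add_mult_distrib2)
      moreover have "\<not> m dvd j'" using j jj dvd_triv by blast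
      ultimately have "\<not> x ((p + m * a + j') mod n)" using H unfolding Cc_def by simp
      then show ?thesis using jj by (simp add: add.commute add.left_commute)
    qed
  qed
qed

lemma thU_add: "thU n m x (a + b) p = (Cc n m x a p \<and> thU n m x b (p + m * a))"
  unfolding thU_def using Cc_add[of n m x a b p]
  by (auto simp: add_mult_distrib2 add.assoc)

lemma thU_big:
  assumes "\<not> m dvd n" "n < m * c"
  shows "\<not> thU n m x c p"
proof
  assume H: "thU n m x c p"
  define d where "d = m * c - n"
  have "n \<noteq> 0" using assms(1) by (metis dvd_0_right)
  then have "1 \<le> d" "d < m * c" using assms d_def by auto
  moreover have "\<not> m dvd d"
  proof
    assume "m dvd d"
    then have "m dvd (m * c - d)" by (simp add: dvd_diff_nat)
    moreover have "m * c - d = n" using assms d_def by auto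
    ultimately show False using assms by simp
  qed
  ultimately have "\<not> x ((p + d) mod n)" using H unfolding thU_def Cc_def by blast
  moreover have "(p + d) mod n = (p + m * c) mod n"
  proof -
    have "p + m * c = (p + d) + n" using d_def assms by auto
    then show ?thesis by (metis mod_add_self2)
  qed
  ultimately show False using H unfolding thU_def by simp
qed

lemma odd_card_pos: "odd (card {j\<in>J. P j}) \<Longrightarrow> \<exists>j\<in>J. P j"
  by (metis (no_types, lifting) card.empty empty_Collect_eq even_zero)

lemma dvd_sub_iff: "(u::nat) \<le> w \<Longrightarrow> m dvd w \<Longrightarrow> m dvd (w - u) \<longleftrightarrow> m dvd u"
  by (metis diff_diff_cancel dvd_diff_nat)

lemma key:
  assumes fin: "finite J" and j0: "j0 \<in> J" "e j0 = 0" and pos: "\<forall>j\<in>J. j \<noteq> j0 \<longrightarrow> e j \<noteq> 0"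
    and Y: "\<forall>p. y (p mod n) = odd (card {j\<in>J. thU n m x (e j) p})"
    and m0: "0 < m"
  shows "thU n m y a i = odd (card {j\<in>J. thU n m x (a + e j) i})"
proof -
  define t where "t = i + m * a"
  have RHS: "odd (card {j\<in>J. thU n m x (a + e j) i}) = (Cc n m x a i \<and> y (t mod n))"
  proof (cases "Cc n m x a i")
    case True
    then have "{j\<in>J. thU n m x (a + e j) i} = {j\<in>J. thU n m x (e j) t}"
      using thU_add[of n m x a _ i] t_def by auto
    then show ?thesis using True Y by simp
  next
    case False
    have E: "{j\<in>J. thU n m x (a + e j) i} = {}"
      using thU_add[of n m x a _ i] False by auto
    show ?thesis using False by (simp only: E card.empty) simp
  qed
  have LHS: "thU n m y a i = (y (t mod n) \<and> Cc n m y a i)"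
    unfolding thU_def t_def by simp
  have "y (t mod n) \<Longrightarrow> Cc n m y a i = Cc n m x a i"
  proof -
    assume yt: "y (t mod n)"
    have oc1: "odd (card {j\<in>J. thU n m x (e j) t})" using Y yt by simp
    obtain j1 where "j1 \<in> J" and tj1: "thU n m x (e j1) t"
      using odd_card_pos[OF oc1] by blast
    define b' where "b' = e j1"
    have xt: "x ((t + m * b') mod n)" and Ct: "Cc n m x b' t"
      using tj1 b'_def unfolding thU_def by auto
    show "Cc n m y a i = Cc n m x a i"
    proof
      assume Cx: "Cc n m x a i"
      show "Cc n m y a i" unfolding Cc_def
      proof (intro allI impI notI)
        fix d assume d: "1 \<le> d \<and> d < m * a \<and> \<not> m dvd d" and yd: "y ((i + d) mod n)"
        have oc2: "odd (card {j\<in>J. thU n m x (e j) (i + d)})" using Y yd by simp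
        obtain j2 where "j2 \<in> J" and tj2: "thU n m x (e j2) (i + d)"
          using odd_card_pos[OF oc2] by blast
        define b where "b = e j2"
        have xp: "x ((i + d + m * b) mod n)" and Cp: "Cc n m x b (i + d)"
          using tj2 b_def unfolding thU_def by auto
        have Cab: "Cc n m x (a + b') i" using Cc_add[of n m x a b' i] Cx Ct t_def by simp
        consider "d + m * b < m * (a + b')" | "d + m * b = m * (a + b')" | "d + m * b > m * (a + b')"
          by linarith
        then show False
        proof cases
          case 1
          have "\<not> m dvd (d + m * b)" using d dvd_triv by blast
          then have "\<not> x ((i + (d + m * b)) mod n)" using Cab 1 d unfolding Cc_def by auto
          then show False using xp by (simp add: add.assoc)
        next
          case 2
          then have "d = m * (a + b') - m * b" by simp
          then have "d = m * (a + b' - b)" by (simp add: diff_mult_distrib2)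
          then show False using d by simp
        next
          case 3
          define E where "E = m * a + m * b' - d"
          have E1: "1 \<le> E" "E < m * b" using 3 d E_def by (auto simp: add_mult_distrib2)
          have "\<not> m dvd E"
            using dvd_sub_iff[of d "m * (a + b')" m] d E_def by (simp add: add_mult_distrib2)
          have "\<not> x ((i + d + E) mod n)" using Cp E1 \<open>\<not> m dvd E\<close> unfolding Cc_def by auto
          moreover have "i + d + E = t + m * b'" using E_def t_def d by auto
          ultimately show False using xt by simp
        qed
      qed
    next
      assume Cy: "Cc n m y a i"
      show "Cc n m x a i"
      proof (rule ccontr)
        assume "\<not> Cc n m x a i"
        define D where "D = {d. 1 \<le> d \<and> d < m * a \<and> \<not> m dvd d \<and> x ((i + d) mod n)}"
        have "D \<noteq> {}" using \<open>\<not> Cc n m x a i\<close> unfolding Cc_def D_def by auto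
        moreover have "finite D" unfolding D_def by (rule finite_subset[of _ "{..<m*a}"]) auto
        ultimately have dmD: "Max D \<in> D" and dmax: "\<And>d. d \<in> D \<Longrightarrow> d \<le> Max D" by auto
        define dm where "dm = Max D"
        have dm: "1 \<le> dm" "dm < m * a" "\<not> m dvd dm" "x ((i + dm) mod n)" using dmD dm_def D_def by auto
        have "{j\<in>J. thU n m x (e j) (i + dm)} = {j0}"
        proof -
          have "thU n m x (e j0) (i + dm)" using j0 dm thU_0 by simp
          moreover have "\<not> thU n m x (e j) (i + dm)" if jJ: "j \<in> J" "j \<noteq> j0" for j
          proof
            assume tj: "thU n m x (e j) (i + dm)"
            define b where "b = e j"
            have b1: "1 \<le> b" using pos jJ b_def by auto
            have xp: "x ((i + dm + m * b) mod n)" and Cp: "Cc n m x b (i + dm)"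
              using tj b_def unfolding thU_def by auto
            have mb1: "1 \<le> m * b" using b1 m0 by simp
            consider "dm + m * b < m * a" | "dm + m * b = m * a" | "dm + m * b > m * a" by linarith
            then show False
            proof cases
              case 1
              have "dm + m * b \<in> D" unfolding D_def using 1 dm xp dvd_triv by (simp add: add.assoc)
              then have "dm + m * b \<le> Max D" by (rule dmax)
              then show False using mb1 dm_def by linarith
            next
              case 2
              then have "dm = m * (a - b)" by (simp add: diff_mult_distrib2)
              then show False using dm by simp
            next
              case 3
              define E where "E = m * a - dm + m * b'"
              consider "E < m * b" | "E = m * b" | "E > m * b" by linarith
              then show False
              proof cases
                case 1
                have "\<not> m dvd E"
                  using dvd_sub_iff[of dm "m * (a + b')" m] dm E_def by (simp add: add_mult_distrib2)
                moreover have "1 \<le> E" using E_def dm by auto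
                ultimately have "\<not> x ((i + dm + E) mod n)" using Cp 1 unfolding Cc_def by auto
                moreover have "i + dm + E = t + m * b'" using E_def t_def dm by auto
                ultimately show False using xt by simp
              next
                case 2
                have "m dvd (m * (a + b') - dm)" using 2 E_def dm by (simp add: add_mult_distrib2)
                then show False using dvd_sub_iff[of dm "m * (a + b')" m] dm by (simp add: add_mult_distrib2)
              next
                case E3: 3
                define F where "F = dm + m * b - m * a"
                have "\<not> m dvd F"
                proof
                  assume "m dvd F"
                  then have "m dvd (F + m * a)" by simp
                  moreover have "F + m * a = dm + m * b" using F_def 3 by simp
                  ultimately show False using dm dvd_triv by metis
                qed
                moreover have "1 \<le> F" "F < m * b'" using F_def E_def 3 E3 dm by auto
                ultimately have "\<not> x ((t + F) mod n)" using Ct unfolding Cc_def by auto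
                moreover have "t + F = i + dm + m * b" using F_def t_def 3 by auto
                ultimately show False using xp by simp
              qed
            qed
          qed
          ultimately show ?thesis using j0 by auto
        qed
        then have "y ((i + dm) mod n)" using Y by simp
        then show False using Cy dm unfolding Cc_def by auto
      qed
    qed
  qed
  then show ?thesis using LHS RHS by auto
qed

lemma oc_Suc: "odd (card {j\<in>{0..Suc s}. P j}) = (odd (card {j\<in>{0..s}. P j}) \<noteq> P (Suc s))"
proof (cases "P (Suc s)")
  case True
  have A: "{j\<in>{0..Suc s}. P j} = insert (Suc s) {j\<in>{0..s}. P j}"
    using True by (auto simp: le_Suc_eq)
  have "card (insert (Suc s) {j\<in>{0..s}. P j}) = Suc (card {j\<in>{0..s}. P j})"
    by (rule card_insert_disjoint) auto
  then show ?thesis using True A by simp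
next
  case False
  have A: "{j\<in>{0..Suc s}. P j} = {j\<in>{0..s}. P j}"
    using False by (auto simp: le_Suc_eq)
  then show ?thesis using False by simp
qed

lemma oc_0: "odd (card {j\<in>{0..0::nat}. P j}) = P 0"
proof -
  have "{j\<in>{0..0::nat}. P j} = (if P 0 then {0} else {})" by auto
  then show ?thesis by simp
qed

lemma oc_01: "odd (card {j\<in>{0..1::nat}. P j}) = (P 0 \<noteq> P 1)"
  by (simp only: One_nat_def oc_Suc oc_0)

lemma bool_xor3: "((a \<noteq> b) \<noteq> (b \<noteq> c)) = (a \<noteq> (c::bool))" by auto

lemma bool4: "((a::bool) \<noteq> b) = (p \<noteq> q) \<Longrightarrow> ((a \<noteq> q) \<noteq> (b \<noteq> r)) = (p \<noteq> r)" by auto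

lemma tele1: "odd (card {j\<in>{0..s}. (P::nat\<Rightarrow>bool) j \<noteq> P (Suc j)}) = (P 0 \<noteq> P (Suc s))"
proof (induction s)
  case 0 show ?case by (simp only: oc_0)
next
  case (Suc s) show ?case
    by (simp only: oc_Suc Suc.IH bool_xor3)
qed

lemma tele2: "(odd (card {j\<in>{0..s}. (P::nat\<Rightarrow>bool) j}) \<noteq> odd (card {j\<in>{0..s}. P (Suc j)})) = (P 0 \<noteq> P (Suc s))"
proof (induction s)
  case 0 show ?case by (simp only: oc_0)
next
  case (Suc s)
  show ?case by (simp only: oc_Suc) (rule bool4[OF Suc.IH])
qed

definition Phi :: "nat \<Rightarrow> nat \<Rightarrow> nat \<Rightarrow> nat \<Rightarrow> (nat \<Rightarrow> bool) \<Rightarrow> (nat \<Rightarrow> bool)" where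
  "Phi n m a r = map_sum {0..r} (\<lambda>j. theta n m (j * a))"

lemma Phi_at: "Phi n m a r x i = (i < n \<and> odd (card {j\<in>{0..r}. thU n m x (j * a) i}))"
  by (cases "i < n") (simp_all add: Phi_def map_sum_def theta_thU)

lemma Phi_vecs: "Phi n m a r x \<in> vecs n"
  by (simp add: vecs_def Phi_at)

lemma Phi_Y: "0 < n \<Longrightarrow> Phi n m a r x (p mod n) = odd (card {j\<in>{0..r}. thU n m x (j * a) p})"
  by (simp add: Phi_at thU_mod)

lemma Phi_key:
  assumes "1 \<le> a" "0 < m" "0 < n" "i < n"
  shows "theta n m c (Phi n m a r x) i = odd (card {j\<in>{0..r}. thU n m x (c + j * a) i})"
proof -
  have "thU n m (Phi n m a r x) c i = odd (card {j\<in>{0..r}. thU n m x (c + j * a) i})"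
    by (rule key[where ?j0.0=0]) (use assms Phi_Y in auto)
  then show ?thesis using assms by (simp add: theta_thU)
qed

lemma big_ge: "n div m < c \<Longrightarrow> 0 < (m::nat) \<Longrightarrow> n < m * c"
proof -
  assume "n div m < c" "0 < m"
  then have "n div m + 1 \<le> c" by simp
  then have "m * (n div m + 1) \<le> m * c" by (rule mult_le_mono2)
  moreover have "n < m * (n div m + 1)" using \<open>0 < m\<close>
    by (metis add.commute div_mult_mod_eq mod_less_divisor mult.commute mult_Suc_right nat_add_left_cancel_less plus_1_eq_Suc)
  ultimately show ?thesis by linarith
qed

lemma vecs_mod: "x \<in> vecs n \<Longrightarrow> i < n \<Longrightarrow> x (i mod n) = x i" by simp

lemma vecs_out: "x \<in> vecs n \<Longrightarrow> \<not> i < n \<Longrightarrow> \<not> x i" by (simp add: vecs_def)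

lemma comp_pow:
  assumes "1 \<le> a" "0 < m" "0 < n" "\<not> m dvd n" "x \<in> vecs n"
  shows "Phi n m a 1 (Phi n m a 1 x) = (if 2 * a \<le> n div m then Phi n m (2 * a) 1 x else x)"
proof
  fix i
  show "Phi n m a 1 (Phi n m a 1 x) i = (if 2 * a \<le> n div m then Phi n m (2 * a) 1 x else x) i"
  proof (cases "i < n")
    case False then show ?thesis using assms vecs_out[of x n i] by (simp add: Phi_at)
  next
    case True
    define P where "P j = thU n m x (j * a) i" for j
    have "Phi n m a 1 (Phi n m a 1 x) i = odd (card {j\<in>{0..1}. theta n m (j * a) (Phi n m a 1 x) i})"
      using True by (simp add: Phi_def map_sum_def)
    also have "\<dots> = odd (card {j\<in>{0..1}. P j \<noteq> P (Suc j)})"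
    proof -
      have eq: "theta n m (j * a) (Phi n m a 1 x) i = (P j \<noteq> P (Suc j))" for j
      proof -
        have "theta n m (j * a) (Phi n m a 1 x) i = odd (card {j'\<in>{0..1}. thU n m x (j * a + j' * a) i})"
          by (rule Phi_key[OF assms(1-3) True])
        also have "\<dots> = (thU n m x (j * a + 0 * a) i \<noteq> thU n m x (j * a + 1 * a) i)" by (rule oc_01)
        also have "\<dots> = (P j \<noteq> P (Suc j))" by (simp add: P_def add.commute)
        finally show ?thesis .
      qed
      show ?thesis by (simp only: eq)
    qed
    also have "\<dots> = (P 0 \<noteq> P 2)" using tele1[where P=P and s=1] by (simp add: numeral_2_eq_2)
    finally have L: "Phi n m a 1 (Phi n m a 1 x) i = (P 0 \<noteq> P 2)" .
    have P0: "P 0 = x i" using True by (simp add: P_def thU_0)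
    show ?thesis
    proof (cases "2 * a \<le> n div m")
      case True2: True
      have R: "Phi n m (2 * a) 1 x i = (thU n m x (0 * (2 * a)) i \<noteq> thU n m x (1 * (2 * a)) i)"
        using True by (simp only: Phi_at oc_01) simp
      have "P 2 = thU n m x (1 * (2 * a)) i" by (simp add: P_def mult.commute)
      moreover have "P 0 = thU n m x (0 * (2 * a)) i" by (simp add: P_def)
      ultimately show ?thesis using L R True2 by simp
    next
      case False
      have "\<not> P 2" unfolding P_def
        by (rule thU_big) (use assms False big_ge in \<open>auto simp: mult.commute\<close>)
      then show ?thesis using L P0 False by simp
    qed
  qed
qed

lemma comp_gf:
  assumes "1 \<le> k" "0 < m" "0 < n" "\<not> m dvd n" "x \<in> vecs n" "n div m < Suc s * k"
  shows "Phi n m k s (Phi n m k 1 x) = x"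
proof
  fix i
  show "Phi n m k s (Phi n m k 1 x) i = x i"
  proof (cases "i < n")
    case False then show ?thesis using assms vecs_out[of x n i] by (simp add: Phi_at)
  next
    case True
    define P where "P j = thU n m x (j * k) i" for j
    have "Phi n m k s (Phi n m k 1 x) i = odd (card {j\<in>{0..s}. theta n m (j * k) (Phi n m k 1 x) i})"
      using True by (simp add: Phi_def map_sum_def)
    also have "\<dots> = odd (card {j\<in>{0..s}. P j \<noteq> P (Suc j)})"
    proof -
      have eq: "theta n m (j * k) (Phi n m k 1 x) i = (P j \<noteq> P (Suc j))" for j
      proof -
        have "theta n m (j * k) (Phi n m k 1 x) i = odd (card {j'\<in>{0..1}. thU n m x (j * k + j' * k) i})"
          by (rule Phi_key[OF assms(1-3) True])
        also have "\<dots> = (thU n m x (j * k + 0 * k) i \<noteq> thU n m x (j * k + 1 * k) i)" by (rule oc_01)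
        also have "\<dots> = (P j \<noteq> P (Suc j))" by (simp add: P_def add.commute)
        finally show ?thesis .
      qed
      show ?thesis by (simp only: eq)
    qed
    also have "\<dots> = (P 0 \<noteq> P (Suc s))" using tele1[where P=P and s=s] by simp
    finally have L: "Phi n m k s (Phi n m k 1 x) i = (P 0 \<noteq> P (Suc s))" .
    have P0: "P 0 = x i" using True by (simp add: P_def thU_0)
    have "\<not> P (Suc s)" unfolding P_def
      by (rule thU_big) (use assms big_ge in auto)
    then show ?thesis using L P0 by simp
  qed
qed

lemma comp_fg:
  assumes "1 \<le> k" "0 < m" "0 < n" "\<not> m dvd n" "x \<in> vecs n" "n div m < Suc s * k"
  shows "Phi n m k 1 (Phi n m k s x) = x"
proof
  fix i
  show "Phi n m k 1 (Phi n m k s x) i = x i"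
  proof (cases "i < n")
    case False then show ?thesis using assms vecs_out[of x n i] by (simp add: Phi_at)
  next
    case True
    define P where "P j = thU n m x (j * k) i" for j
    have "Phi n m k 1 (Phi n m k s x) i = odd (card {j\<in>{0..1}. theta n m (j * k) (Phi n m k s x) i})"
      using True by (simp add: Phi_def map_sum_def)
    also have "\<dots> = (odd (card {j\<in>{0..s}. P j}) \<noteq> odd (card {j\<in>{0..s}. P (Suc j)}))"
    proof -
      define Q where "Q j = odd (card {j'\<in>{0..s}. thU n m x (j * k + j' * k) i})" for j
      have eq: "theta n m (j * k) (Phi n m k s x) i = Q j" for j
        unfolding Q_def by (rule Phi_key[OF assms(1-3) True])
      have "odd (card {j\<in>{0..1}. theta n m (j * k) (Phi n m k s x) i}) = (Q 0 \<noteq> Q 1)"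
        by (simp only: eq oc_01)
      moreover have "Q 0 = odd (card {j\<in>{0..s}. P j})" by (simp add: Q_def P_def)
      moreover have "Q 1 = odd (card {j\<in>{0..s}. P (Suc j)})" by (simp add: Q_def P_def add.commute)
      ultimately show ?thesis by simp
    qed
    also have "\<dots> = (P 0 \<noteq> P (Suc s))" using tele2[where P=P and s=s] by simp
    finally have L: "Phi n m k 1 (Phi n m k s x) i = (P 0 \<noteq> P (Suc s))" .
    have P0: "P 0 = x i" using True by (simp add: P_def thU_0)
    have "\<not> P (Suc s)" unfolding P_def
      by (rule thU_big) (use assms big_ge in auto)
    then show ?thesis using L P0 by simp
  qed
qed

lemma f_eq: "map_add (theta n m 0) (theta n m k) = Phi n m k 1"
proof (intro ext)
  fix x i
  show "map_add (theta n m 0) (theta n m k) x i = Phi n m k 1 x i"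
    by (simp only: map_add_def Phi_def map_sum_def oc_01) simp
qed

lemma pw:
  assumes "1 \<le> k" "0 < m" "0 < n" "\<not> m dvd n" "k \<le> n div m"
  shows "\<forall>x\<in>vecs n. (Phi n m k 1 ^^ (2 ^ t)) x
           = (if 2 ^ t * k \<le> n div m then Phi n m (2 ^ t * k) 1 x else x)"
proof (induction t)
  case 0
  then show ?case using assms by simp
next
  case (Suc t)
  show ?case
  proof
    fix x assume x: "x \<in> vecs n"
    define F where "F = Phi n m k 1"
    have IH: "\<And>z. z \<in> vecs n \<Longrightarrow> (F ^^ (2 ^ t)) z
           = (if 2 ^ t * k \<le> n div m then Phi n m (2 ^ t * k) 1 z else z)"
      using Suc.IH F_def by blast
    have "(F ^^ (2 ^ Suc t)) x = (F ^^ (2 ^ t)) ((F ^^ (2 ^ t)) x)"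
      by (simp add: funpow_add mult_2)
    also have "\<dots> = (if 2 ^ Suc t * k \<le> n div m then Phi n m (2 ^ Suc t * k) 1 x else x)"
    proof (cases "2 ^ t * k \<le> n div m")
      case True
      have a1: "1 \<le> 2 ^ t * k" using assms by simp
      have "(F ^^ (2 ^ t)) x = Phi n m (2 ^ t * k) 1 x" using IH[OF x] True by simp
      moreover have "(F ^^ (2 ^ t)) (Phi n m (2 ^ t * k) 1 x) = Phi n m (2 ^ t * k) 1 (Phi n m (2 ^ t * k) 1 x)"
        using IH[OF Phi_vecs] True by simp
      moreover have "Phi n m (2 ^ t * k) 1 (Phi n m (2 ^ t * k) 1 x) =
          (if 2 * (2 ^ t * k) \<le> n div m then Phi n m (2 * (2 ^ t * k)) 1 x else x)"
        by (rule comp_pow[OF a1 assms(2-4) x])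
      ultimately show ?thesis by (simp add: mult.assoc)
    next
      case False
      then have "\<not> 2 ^ Suc t * k \<le> n div m"
        by (metis le_trans mult_le_mono1 power_increasing_iff le_SucI order_refl one_less_numeral_iff semiring_norm(76))
      then show ?thesis using IH[OF x] False by simp
    qed
    finally show "(Phi n m k 1 ^^ 2 ^ Suc t) x
           = (if 2 ^ Suc t * k \<le> n div m then Phi n m (2 ^ Suc t * k) 1 x else x)"
      using F_def by simp
  qed
qed

lemma idp_sub:
  assumes "is_identity_power n F a" "is_identity_power n F b" "b \<le> a"
  shows "is_identity_power n F (a - b)"
  unfolding is_identity_power_def
proof
  fix x assume x: "x \<in> vecs n"
  have "(F ^^ (a - b)) x = (F ^^ (a - b)) ((F ^^ b) x)" using assms(2) x
    unfolding is_identity_power_def by simp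
  also have "\<dots> = (F ^^ (a - b + b)) x" by (simp add: funpow_add)
  also have "\<dots> = x" using assms(1,3) x unfolding is_identity_power_def by simp
  finally show "(F ^^ (a - b)) x = x" .
qed

lemma idp_mult:
  assumes "is_identity_power n F b"
  shows "is_identity_power n F (c * b)"
  unfolding is_identity_power_def
proof
  fix x assume x: "x \<in> vecs n"
  have "((F ^^ b) ^^ c) x = x"
    by (induction c) (use assms x in \<open>auto simp: is_identity_power_def\<close>)
  then show "(F ^^ (c * b)) x = x" by (simp add: funpow_mult mult.commute)
qed

lemma idp_mod:
  assumes "is_identity_power n F a" "is_identity_power n F b"
  shows "is_identity_power n F (a mod b)"
proof -
  have "is_identity_power n F ((a div b) * b)" by (rule idp_mult[OF assms(2)])
  moreover have "a div b * b \<le> a" by (metis div_mult_mod_eq le_add1)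
  ultimately have "is_identity_power n F (a - a div b * b)" using idp_sub assms(1) by blast
  then show ?thesis by (simp add: minus_div_mult_eq_mod)
qed

lemma e0_not_fixed:
  assumes "1 \<le> a" "0 < m" "\<not> m dvd n" "a \<le> n div m"
  shows "Phi n m a 1 (\<lambda>p. p = 0) \<noteq> (\<lambda>p. p = 0)"
proof
  assume H: "Phi n m a 1 (\<lambda>p. p = 0) = (\<lambda>p. p = 0)"
  have "m * a \<le> m * (n div m)" using assms by simp
  also have "\<dots> \<le> n" by (simp add: mult.commute)
  finally have le: "m * a \<le> n" .
  have ne: "m * a \<noteq> n" using assms by auto
  have ma1: "1 \<le> m * a" using assms by simp
  define i where "i = n - m * a"
  have i: "1 \<le> i" "i < n" "i + m * a = n" using le ne ma1 i_def by auto
  have "\<not> thU n m (\<lambda>p. p = 0) 0 i" using i by (simp add: thU_0)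
  moreover have "thU n m (\<lambda>p. p = 0) a i"
    unfolding thU_def Cc_def using i by auto
  ultimately have "Phi n m a 1 (\<lambda>p. p = 0) i"
    using i by (simp only: Phi_at oc_01) simp
  then show False using H i by (metis not_one_le_zero)
qed

lemma order_main:
  assumes "1 \<le> k" "0 < m" "0 < n" "\<not> m dvd n" "k \<le> n div m"
  defines "T \<equiv> LEAST t. n div m < 2 ^ t * k"
  shows "(\<exists>r\<ge>1. is_identity_power n (Phi n m k 1) r) \<and> map_order n (Phi n m k 1) = 2 ^ T
         \<and> 1 \<le> T \<and> n div m < 2 ^ T * k \<and> 2 ^ (T - 1) * k \<le> n div m"
proof -
  define F where "F = Phi n m k 1"
  define l where "l = n div m"
  have ex: "l < 2 ^ l * k" using assms(1)
    by (metis less_exp mult.right_neutral mult_le_mono2 order_less_le_trans)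
  have T1: "l < 2 ^ T * k" unfolding T_def l_def by (rule LeastI[of _ l]) (use ex l_def in auto)
  have T0: "T \<noteq> 0" using T1 assms(5) l_def
    by (metis T_def LeastI_ex Least_eq_0 ex mult_1 not_le power_0)
  then have Tge: "1 \<le> T" by simp
  have T2: "2 ^ (T - 1) * k \<le> l"
  proof -
    have "T - 1 < T" using T0 by simp
    then have "\<not> l < 2 ^ (T - 1) * k" unfolding T_def l_def by (rule not_less_Least)
    then show ?thesis by simp
  qed
  have PT: "is_identity_power n F (2 ^ T)"
    unfolding is_identity_power_def F_def using pw[OF assms(1-5), of T] T1 l_def by simp
  have notP: "\<not> is_identity_power n F (2 ^ (T - 1))"
  proof
    assume "is_identity_power n F (2 ^ (T - 1))"
    moreover have "(\<lambda>p::nat. p = 0) \<in> vecs n" using assms(3) by (simp add: vecs_def)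
    ultimately have "(F ^^ (2 ^ (T - 1))) (\<lambda>p. p = 0) = (\<lambda>p. p = 0)"
      unfolding is_identity_power_def by blast
    moreover have "(F ^^ (2 ^ (T - 1))) (\<lambda>p. p = 0) = Phi n m (2 ^ (T - 1) * k) 1 (\<lambda>p. p = 0)"
      using pw[OF assms(1-5), of "T - 1"] T2 l_def F_def \<open>(\<lambda>p::nat. p = 0) \<in> vecs n\<close> by simp
    moreover have "Phi n m (2 ^ (T - 1) * k) 1 (\<lambda>p. p = 0) \<noteq> (\<lambda>p. p = 0)"
      by (rule e0_not_fixed) (use assms T2 l_def in auto)
    ultimately show False by simp
  qed
  define r0 where "r0 = (LEAST r. 1 \<le> r \<and> is_identity_power n F r)"
  have ex2: "1 \<le> (2::nat) ^ T \<and> is_identity_power n F (2 ^ T)" using PT by simp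
  have r0: "1 \<le> r0" "is_identity_power n F r0" using LeastI[of "\<lambda>r. 1 \<le> r \<and> is_identity_power n F r", OF ex2]
    r0_def by auto
  have "2 ^ T mod r0 = 0"
  proof (rule ccontr)
    assume nz: "2 ^ T mod r0 \<noteq> 0"
    have "is_identity_power n F (2 ^ T mod r0)" by (rule idp_mod[OF PT r0(2)])
    moreover have "2 ^ T mod r0 < r0" using r0(1) by simp
    ultimately show False using nz r0_def not_less_Least[of "2 ^ T mod r0" "\<lambda>r. 1 \<le> r \<and> is_identity_power n F r"]
      by auto
  qed
  then have "r0 dvd 2 ^ T" by auto
  then obtain v where v: "v \<le> T" "r0 = 2 ^ v"
    using divides_primepow[of "2::nat" r0 T] by auto
  have "v = T"
  proof (rule ccontr)
    assume "v \<noteq> T"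
    then have "v \<le> T - 1" using v by simp
    then have "r0 dvd 2 ^ (T - 1)" using v by (simp add: le_imp_power_dvd)
    then obtain c where "2 ^ (T - 1) = c * r0" by (metis dvd_def mult.commute)
    then have "is_identity_power n F (2 ^ (T - 1))" using idp_mult[OF r0(2)] by metis
    then show False using notP by simp
  qed
  then have "map_order n F = 2 ^ T" using v r0_def map_order_def by simp
  moreover have "\<exists>r\<ge>1. is_identity_power n F r" using PT by (intro exI[of _ "2 ^ T"]) simp
  ultimately show ?thesis using Tge T1 T2 l_def F_def by auto
qed

lemma log_part:
  assumes "1 \<le> k" "1 \<le> T" "l < 2 ^ T * k" "2 ^ (T - 1) * k \<le> l"
  shows "nat \<lceil>log 2 ((real l + 1) / real k)\<rceil> = T"
proof -
  define r where "r = (real l + 1) / real k"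
  have kpos: "0 < real k" using assms by simp
  have r0: "0 < r" using kpos r_def by simp
  have "real l + 1 \<le> 2 ^ T * real k"
  proof -
    have "l + 1 \<le> 2 ^ T * k" using assms(3) by simp
    then have "real (l + 1) \<le> real (2 ^ T * k)" by (rule of_nat_mono)
    then show ?thesis by simp
  qed
  then have up: "r \<le> 2 ^ T" using kpos r_def by (simp add: divide_le_eq)
  have "2 ^ (T - 1) * real k < real l + 1"
  proof -
    have "2 ^ (T - 1) * k < l + 1" using assms(4) by simp
    then have "real (2 ^ (T - 1) * k) < real (l + 1)" by (simp only: of_nat_less_iff)
    then show ?thesis by simp
  qed
  then have lo: "2 ^ (T - 1) < r" using kpos r_def by (simp add: less_divide_eq)
  have "log 2 r \<le> log 2 (2 ^ T)" by (rule log_le_cancel_iff[THEN iffD2]) (use up r0 in auto)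
  then have A: "log 2 r \<le> real T" by simp
  have "log 2 (2 ^ (T - 1)) < log 2 r" by (rule log_less_cancel_iff[THEN iffD2]) (use lo r0 in auto)
  then have "real (T - 1) < log 2 r" by simp
  then have B: "real T - 1 < log 2 r" using assms(2) by (simp add: of_nat_diff)
  have "\<lceil>log 2 r\<rceil> = int T" by (rule ceiling_unique) (use A B in auto)
  then show ?thesis using r_def by simp
qed

lemma modinj:
  assumes "(i + u) mod n = (i + v) mod n" "u < (n::nat)" "v < n"
  shows "u = v"
proof -
  have "u \<le> v \<Longrightarrow> (i + u) mod n = (i + v) mod n \<Longrightarrow> v < n \<Longrightarrow> u = v" for u v
  proof -
    assume uv: "u \<le> v" "(i + u) mod n = (i + v) mod n" "v < n"
    then have "n dvd (i + v) - (i + u)" using mod_eq_dvd_iff_nat[of "i + u" "i + v" n] by simp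
    then have "n dvd v - u" by simp
    moreover have "v - u < n" using uv by simp
    ultimately have "v - u = 0" by (metis nat_dvd_not_less gr0I)
    then show "u = v" using uv by simp
  qed
  then show ?thesis using assms by (metis nat_le_linear)
qed

definition Jset :: "nat \<Rightarrow> nat \<Rightarrow> nat \<Rightarrow> nat \<Rightarrow> nat set" where
  "Jset n m i c = (\<lambda>j. (i + j) mod n) ` {j. 1 \<le> j \<and> j < m * c \<and> \<not> m dvd j}"

definition Vp :: "nat \<Rightarrow> nat \<Rightarrow> nat \<Rightarrow> nat \<Rightarrow> nat" where
  "Vp n m i c = (i + m * c) mod n"

definition Fam :: "nat \<Rightarrow> nat \<Rightarrow> nat \<Rightarrow> nat \<Rightarrow> nat set set" where
  "Fam n m i c = insert (Vp n m i c) ` Pow (Jset n m i c)"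

lemma Jset_fin: "finite (Jset n m i c)"
  unfolding Jset_def by (rule finite_imageI) (rule finite_subset[of _ "{..<m*c}"], auto)

lemma Fam_fin: "finite (Fam n m i c)"
  unfolding Fam_def using Jset_fin by simp

lemma V_notin: "m * c < n \<Longrightarrow> Vp n m i c \<notin> Jset n m i c"
  unfolding Vp_def Jset_def
proof
  assume mc: "m * c < n" and "(i + m * c) mod n \<in> (\<lambda>j. (i + j) mod n) ` {j. 1 \<le> j \<and> j < m * c \<and> \<not> m dvd j}"
  then obtain j where j: "1 \<le> j" "j < m * c" "\<not> m dvd j" "(i + m * c) mod n = (i + j) mod n" by auto
  then have "m * c = j" using modinj[OF j(4)] mc by simp
  then show False using j by auto
qed

lemma card_nondvd: "0 < m \<Longrightarrow> card {j. 1 \<le> j \<and> j < m * c \<and> \<not> m dvd j} = (m - 1) * c"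
proof -
  assume m: "0 < m"
  have A: "{j. 1 \<le> j \<and> j < m * c \<and> \<not> m dvd j} = {..<m * c} - {j. j < m * c \<and> m dvd j}"
    by (auto simp: Suc_le_eq) (metis dvd_0_right gr0I)
  have B: "{j. j < m * c \<and> m dvd j} = (\<lambda>q. m * q) ` {..<c}"
  proof
    show "{j. j < m * c \<and> m dvd j} \<subseteq> (\<lambda>q. m * q) ` {..<c}"
    proof
      fix j assume "j \<in> {j. j < m * c \<and> m dvd j}"
      then obtain q where "j = m * q" "m * q < m * c" by auto
      then show "j \<in> (\<lambda>q. m * q) ` {..<c}" using m by auto
    qed
    show "(\<lambda>q. m * q) ` {..<c} \<subseteq> {j. j < m * c \<and> m dvd j}" using m by auto
  qed
  have "card {j. j < m * c \<and> m dvd j} = c" unfolding B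
    by (subst card_image) (use m in \<open>auto simp: inj_on_def\<close>)
  moreover have "{j. j < m * c \<and> m dvd j} \<subseteq> {..<m * c}" by auto
  ultimately have "card ({..<m * c} - {j. j < m * c \<and> m dvd j}) = m * c - c"
    by (simp add: card_Diff_subset finite_subset[of _ "{..<m*c}"])
  then show ?thesis unfolding A by (simp add: diff_mult_distrib)
qed

lemma card_Jset: "0 < m \<Longrightarrow> m * c < n \<Longrightarrow> card (Jset n m i c) = (m - 1) * c"
proof -
  assume m: "0 < m" and mc: "m * c < n"
  have "inj_on (\<lambda>j. (i + j) mod n) {j. 1 \<le> j \<and> j < m * c \<and> \<not> m dvd j}"
    unfolding inj_on_def using modinj mc by (metis (mono_tags, lifting) mem_Collect_eq order_less_trans)
  then have "card (Jset n m i c) = card {j. 1 \<le> j \<and> j < m * c \<and> \<not> m dvd j}"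
    unfolding Jset_def by (rule card_image)
  then show ?thesis using card_nondvd[OF m] by simp
qed

lemma Fam_rep:
  assumes "m * c < n"
  shows "odd (card {S\<in>Fam n m i c. \<forall>q\<in>S. x q}) = thU n m x c i"
proof -
  define J where "J = Jset n m i c"
  define V where "V = Vp n m i c"
  have VJ: "V \<notin> J" using V_notin[OF assms] J_def V_def by simp
  have finJ: "finite J" using Jset_fin J_def by simp
  have eq: "{S\<in>Fam n m i c. \<forall>q\<in>S. x q} = (if x V then insert V ` Pow (J \<inter> Collect x) else {})"
    unfolding Fam_def J_def[symmetric] V_def[symmetric] by auto
  have inj: "inj_on (insert V) (Pow (J \<inter> Collect x))"
    unfolding inj_on_def using VJ by (metis IntE PowD insert_ident subsetD)
  have cardv: "odd (card (insert V ` Pow (J \<inter> Collect x))) = (J \<inter> Collect x = {})"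
  proof -
    have f2: "finite (J \<inter> Collect x)" using finJ by simp
    have "card (insert V ` Pow (J \<inter> Collect x)) = card (Pow (J \<inter> Collect x))"
      by (rule card_image[OF inj])
    also have "\<dots> = 2 ^ card (J \<inter> Collect x)" by (rule card_Pow[OF f2])
    finally have "card (insert V ` Pow (J \<inter> Collect x)) = 2 ^ card (J \<inter> Collect x)" .
    moreover have "card (J \<inter> Collect x) = 0 \<longleftrightarrow> J \<inter> Collect x = {}" using finJ by simp
    ultimately show ?thesis by simp
  qed
  have C: "(J \<inter> Collect x = {}) = Cc n m x c i"
    unfolding J_def Jset_def Cc_def by auto
  show ?thesis
    using eq cardv C unfolding thU_def V_def Vp_def by auto
qed

lemma Fam_disj:
  assumes "m * c < n" "m * c' < n" "c \<noteq> c'" "0 < m"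
  shows "Fam n m i c \<inter> Fam n m i c' = {}"
proof -
  have "\<not> (S \<in> Fam n m i c \<and> S \<in> Fam n m i c')" if lt: "c < c'" "m * c < n" "m * c' < n" for c c' S
  proof
    assume S: "S \<in> Fam n m i c \<and> S \<in> Fam n m i c'"
    then have "Vp n m i c' \<in> S" unfolding Fam_def by auto
    moreover obtain T where T: "S = insert (Vp n m i c) T" "T \<subseteq> Jset n m i c" using S unfolding Fam_def by auto
    ultimately have "Vp n m i c' = Vp n m i c \<or> Vp n m i c' \<in> Jset n m i c" by auto
    then show False
    proof
      assume "Vp n m i c' = Vp n m i c"
      then have "m * c' = m * c" using modinj lt unfolding Vp_def by metis
      then show False using lt assms(4) by simp
    next
      assume "Vp n m i c' \<in> Jset n m i c"
      then obtain j where j: "j < m * c" "(i + m * c') mod n = (i + j) mod n"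
        unfolding Vp_def Jset_def by auto
      then have "m * c' = j" using modinj lt by (metis order_less_trans)
      moreover have "m * c < m * c'" using lt assms(4) by simp
      ultimately show False using j by simp
    qed
  qed
  then show ?thesis using assms by (cases "c < c'") (auto, metis linorder_neqE_nat)
qed

lemma odd_sum_card: "finite J \<Longrightarrow> odd (sum (f :: 'a \<Rightarrow> nat) J) = odd (card {j\<in>J. odd (f j)})"
proof (induction J rule: finite_induct)
  case empty then show ?case by simp
next
  case (insert a F)
  have fin: "finite {j\<in>F. odd (f j)}" using insert by simp
  show ?case
  proof (cases "odd (f a)")
    case True
    have "{j\<in>insert a F. odd (f j)} = insert a {j\<in>F. odd (f j)}" using True by auto
    moreover have "card (insert a {j\<in>F. odd (f j)}) = Suc (card {j\<in>F. odd (f j)})"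
      using fin insert by simp
    ultimately show ?thesis using insert True by simp
  next
    case False
    have "{j\<in>insert a F. odd (f j)} = {j\<in>F. odd (f j)}" using False by auto
    then show ?thesis using insert False by simp
  qed
qed

lemma anf_half:
  assumes "S0 \<in> A" "S0 \<notin> B" "S0 \<subseteq> {..<(n::nat)}" "A \<subseteq> Pow {..<n}" "B \<subseteq> Pow {..<n}"
    and sub: "\<forall>S. S \<subset> S0 \<longrightarrow> (S \<in> A \<longleftrightarrow> S \<in> B)"
  shows "odd (card {S\<in>A. \<forall>i\<in>S. i \<in> S0}) \<noteq> odd (card {S\<in>B. \<forall>i\<in>S. i \<in> S0})"
proof -
  have finB: "finite B" by (rule finite_subset[OF assms(5)]) simp
  have eq: "{S\<in>A. \<forall>i\<in>S. i \<in> S0} = insert S0 {S\<in>B. \<forall>i\<in>S. i \<in> S0}"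
  proof
    show "{S\<in>A. \<forall>i\<in>S. i \<in> S0} \<subseteq> insert S0 {S\<in>B. \<forall>i\<in>S. i \<in> S0}"
    proof
      fix S assume "S \<in> {S\<in>A. \<forall>i\<in>S. i \<in> S0}"
      then have SA: "S \<in> A" "S \<subseteq> S0" by auto
      show "S \<in> insert S0 {S\<in>B. \<forall>i\<in>S. i \<in> S0}"
      proof (cases "S = S0")
        case False
        then have "S \<subset> S0" using SA by blast
        then have "S \<in> B" using sub SA by blast
        then show ?thesis using SA by blast
      qed simp
    qed
    show "insert S0 {S\<in>B. \<forall>i\<in>S. i \<in> S0} \<subseteq> {S\<in>A. \<forall>i\<in>S. i \<in> S0}"
    proof
      fix S assume H: "S \<in> insert S0 {S\<in>B. \<forall>i\<in>S. i \<in> S0}"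
      show "S \<in> {S\<in>A. \<forall>i\<in>S. i \<in> S0}"
      proof (cases "S = S0")
        case True then show ?thesis using assms(1) by blast
      next
        case False
        then have SB: "S \<in> B" "S \<subseteq> S0" using H by auto
        then have "S \<subset> S0" using False by blast
        then have "S \<in> A" using sub SB by blast
        then show ?thesis using SB by blast
      qed
    qed
  qed
  have "card (insert S0 {S\<in>B. \<forall>i\<in>S. i \<in> S0}) = Suc (card {S\<in>B. \<forall>i\<in>S. i \<in> S0})"
    using finB assms(2) by simp
  then show ?thesis using eq by simp
qed

lemma anf_unique:
  assumes A: "A \<subseteq> Pow {..<n}" and B: "B \<subseteq> Pow {..<n}"
    and eq: "\<forall>x\<in>vecs n. odd (card {S\<in>A. \<forall>i\<in>S. x i}) = odd (card {S\<in>B. \<forall>i\<in>S. x i})"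
  shows "A = B"
proof (rule ccontr)
  assume "A \<noteq> B"
  define D where "D = (A - B) \<union> (B - A)"
  have "D \<noteq> {}" using \<open>A \<noteq> B\<close> D_def by auto
  then obtain S1 where "S1 \<in> D" by auto
  then obtain S0 where S0: "S0 \<in> D" and mn: "\<And>S. S \<in> D \<Longrightarrow> card S0 \<le> card S"
    using ex_has_least_nat[of "\<lambda>S. S \<in> D" S1 card] by auto
  have S0n: "S0 \<subseteq> {..<n}" using S0 A B D_def by auto
  have sub: "\<forall>S. S \<subset> S0 \<longrightarrow> (S \<in> A \<longleftrightarrow> S \<in> B)"
  proof (intro allI impI)
    fix S assume "S \<subset> S0"
    moreover have "finite S0" using S0n finite_subset by blast
    ultimately have "card S < card S0" by (simp add: psubset_card_mono)
    then have "S \<notin> D" using mn[of S] by linarith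
    then show "S \<in> A \<longleftrightarrow> S \<in> B" using D_def by auto
  qed
  have xv: "(\<lambda>q. q \<in> S0) \<in> vecs n" using S0n by (auto simp: vecs_def)
  have E: "odd (card {S\<in>A. \<forall>i\<in>S. i \<in> S0}) = odd (card {S\<in>B. \<forall>i\<in>S. i \<in> S0})"
    using bspec[OF eq xv] by simp
  show False
  proof (cases "S0 \<in> A")
    case True
    then have "S0 \<notin> B" using S0 D_def by auto
    then show False using anf_half[OF True _ S0n A B sub] E by simp
  next
    case False
    then have "S0 \<in> B" using S0 D_def by auto
    moreover have "\<forall>S. S \<subset> S0 \<longrightarrow> (S \<in> B \<longleftrightarrow> S \<in> A)" using sub by blast
    ultimately show False using anf_half[OF _ False S0n B A] E by simp
  qed
qed

lemma anf_eq:
  assumes "A \<subseteq> Pow {..<n}" "\<forall>x\<in>vecs n. g x = odd (card {S\<in>A. \<forall>i\<in>S. x i})"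
  shows "anf n g = A"
  unfolding anf_def
proof (rule the_equality)
  show "A \<subseteq> Pow {..<n} \<and> (\<forall>x\<in>vecs n. g x = odd (card {S \<in> A. \<forall>i\<in>S. x i}))" using assms by simp
  fix B assume HB: "B \<subseteq> Pow {..<n} \<and> (\<forall>x\<in>vecs n. g x = odd (card {S \<in> B. \<forall>i\<in>S. x i}))"
  have EQ: "\<forall>x\<in>vecs n. odd (card {S \<in> B. \<forall>i\<in>S. x i}) = odd (card {S \<in> A. \<forall>i\<in>S. x i})"
  proof
    fix x assume xv: "x \<in> vecs n"
    show "odd (card {S \<in> B. \<forall>i\<in>S. x i}) = odd (card {S \<in> A. \<forall>i\<in>S. x i})"
      using bspec[OF conjunct2[OF HB] xv] bspec[OF assms(2) xv] by simp
  qed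
  show "B = A" by (rule anf_unique[OF conjunct1[OF HB] assms(1) EQ])
qed

lemma deg_main:
  assumes m: "0 < m" and k: "1 \<le> k" and r: "1 \<le> r" and mn: "m * (r * k) < n" and i: "i < n"
  shows "bool_fun_degree n (\<lambda>x. odd (card {j\<in>{0..r}. theta n m (j * k) x i})) = (m - 1) * r * k + 1"
proof -
  define A where "A = (\<Union>j\<in>{0..r}. Fam n m i (j * k))"
  have mjk: "m * (j * k) < n" if "j \<le> r" for j
  proof -
    have "m * (j * k) \<le> m * (r * k)" using that by simp
    then show ?thesis using mn by linarith
  qed
  have finA: "finite A" unfolding A_def using Fam_fin by simp
  have Asub: "A \<subseteq> Pow {..<n}"
    unfolding A_def Fam_def Vp_def Jset_def using i by auto
  have rep: "\<forall>x\<in>vecs n. odd (card {j\<in>{0..r}. theta n m (j * k) x i}) = odd (card {S\<in>A. \<forall>q\<in>S. x q})"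
  proof
    fix x :: "nat \<Rightarrow> bool"
    have U: "{S\<in>A. \<forall>q\<in>S. x q} = (\<Union>j\<in>{0..r}. {S\<in>Fam n m i (j * k). \<forall>q\<in>S. x q})"
      unfolding A_def by auto
    have "card (\<Union>j\<in>{0..r}. {S\<in>Fam n m i (j * k). \<forall>q\<in>S. x q})
          = (\<Sum>j\<in>{0..r}. card {S\<in>Fam n m i (j * k). \<forall>q\<in>S. x q})"
    proof (rule card_UN_disjoint)
      show "finite {0..r}" by simp
      show "\<forall>j\<in>{0..r}. finite {S \<in> Fam n m i (j * k). \<forall>q\<in>S. x q}" using Fam_fin by simp
      show "\<forall>j\<in>{0..r}. \<forall>j'\<in>{0..r}. j \<noteq> j' \<longrightarrow>
          {S \<in> Fam n m i (j * k). \<forall>q\<in>S. x q} \<inter> {S \<in> Fam n m i (j' * k). \<forall>q\<in>S. x q} = {}"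
      proof (intro ballI impI)
        fix j j' assume jj: "j \<in> {0..r}" "j' \<in> {0..r}" "j \<noteq> j'"
        have "Fam n m i (j * k) \<inter> Fam n m i (j' * k) = {}"
          by (rule Fam_disj) (use jj mjk k m in auto)
        then show "{S \<in> Fam n m i (j * k). \<forall>q\<in>S. x q} \<inter> {S \<in> Fam n m i (j' * k). \<forall>q\<in>S. x q} = {}"
          by auto
      qed
    qed
    then have "odd (card {S\<in>A. \<forall>q\<in>S. x q})
        = odd (card {j\<in>{0..r}. odd (card {S\<in>Fam n m i (j * k). \<forall>q\<in>S. x q})})"
      using U odd_sum_card[of "{0..r}"] by simp
    also have "\<dots> = odd (card {j\<in>{0..r}. theta n m (j * k) x i})"
    proof -
      have "\<And>j. j \<in> {0..r} \<Longrightarrow> odd (card {S\<in>Fam n m i (j * k). \<forall>q\<in>S. x q}) = theta n m (j * k) x i"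
        using Fam_rep mjk i theta_thU by simp
      then have "{j\<in>{0..r}. odd (card {S\<in>Fam n m i (j * k). \<forall>q\<in>S. x q})} = {j\<in>{0..r}. theta n m (j * k) x i}"
        by blast
      then show ?thesis by simp
    qed
    finally show "odd (card {j\<in>{0..r}. theta n m (j * k) x i}) = odd (card {S\<in>A. \<forall>q\<in>S. x q})" by simp
  qed
  have anfA: "anf n (\<lambda>x. odd (card {j\<in>{0..r}. theta n m (j * k) x i})) = A"
    by (rule anf_eq[OF Asub]) (use rep in simp)
  define D where "D = (m - 1) * r * k + 1"
  have ub: "card S \<le> D" if "S \<in> A" for S
  proof -
    obtain j T where j: "j \<le> r" and T: "T \<subseteq> Jset n m i (j * k)" and S: "S = insert (Vp n m i (j * k)) T"
      using \<open>S \<in> A\<close> unfolding A_def Fam_def by auto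
    have "finite T" using T Jset_fin finite_subset by blast
    then have "card S \<le> Suc (card T)" using S by (simp add: card_insert_if)
    also have "card T \<le> card (Jset n m i (j * k))" using T Jset_fin by (simp add: card_mono)
    also have "\<dots> = (m - 1) * (j * k)" using card_Jset m mjk j by simp
    also have "\<dots> \<le> (m - 1) * (r * k)" using j by simp
    finally show ?thesis unfolding D_def by (simp add: mult.assoc)
  qed
  have top: "insert (Vp n m i (r * k)) (Jset n m i (r * k)) \<in> A"
    unfolding A_def Fam_def by auto
  have ctop: "card (insert (Vp n m i (r * k)) (Jset n m i (r * k))) = D"
    using V_notin[OF mn] Jset_fin card_Jset[OF m mn] D_def by (simp add: mult.assoc)
  have "Max (insert 0 (card ` A)) = D"
  proof (rule Max_eqI)
    show "finite (insert 0 (card ` A))" using finA by simp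
    show "\<And>y. y \<in> insert 0 (card ` A) \<Longrightarrow> y \<le> D" using ub by auto
    show "D \<in> insert 0 (card ` A)" using top ctop by (metis image_eqI insertI2)
  qed
  then show ?thesis unfolding bool_fun_degree_def anfA D_def .
qed

lemma alg_deg_const:
  assumes "0 < n" "\<forall>i<n. bool_fun_degree n (\<lambda>x. F x i) = D"
  shows "alg_degree n F = D"
proof -
  have "(\<lambda>i. bool_fun_degree n (\<lambda>x. F x i)) ` {..<n} = {D}" using assms by force
  then show ?thesis unfolding alg_degree_def by simp
qed

theorem theorem3:
  fixes n m k :: nat
  assumes "n \<ge> 1" and "m \<ge> 2" and "\<not> m dvd n"
    and "1 \<le> k" and "k \<le> n div m"
  defines "l \<equiv> n div m"
  defines "s \<equiv> l div k"
  defines "f \<equiv> map_add (theta n m 0) (theta n m k)"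
  defines "g \<equiv> map_sum {0..s} (\<lambda>j. theta n m (j * k))"
  shows "(\<exists>r\<ge>1. is_identity_power n f r)
      \<and> map_order n f = 2 ^ nat \<lceil>log 2 ((real l + 1) / real k)\<rceil>
      \<and> is_inverse_map n f g
      \<and> alg_degree n f = (m - 1) * k + 1
      \<and> alg_degree n g = (m - 1) * s * k + 1"
proof -
  have m0: "0 < m" using assms by simp
  have n0: "0 < n" using assms by simp
  have fP: "f = Phi n m k 1" unfolding f_def by (rule f_eq)
  have gP: "g = Phi n m k s" unfolding g_def Phi_def by simp
  define T where "T = (LEAST t. n div m < 2 ^ t * k)"
  have O: "(\<exists>r\<ge>1. is_identity_power n (Phi n m k 1) r) \<and> map_order n (Phi n m k 1) = 2 ^ T
         \<and> 1 \<le> T \<and> n div m < 2 ^ T * k \<and> 2 ^ (T - 1) * k \<le> n div m"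
    unfolding T_def by (rule order_main) (use assms m0 n0 in auto)
  have LT: "nat \<lceil>log 2 ((real l + 1) / real k)\<rceil> = T"
    by (rule log_part) (use O assms l_def in auto)
  have ls: "n div m < Suc s * k"
  proof -
    have e: "l = l div k * k + l mod k" by simp
    moreover have "l mod k < k" using assms by simp
    ultimately have "l < Suc (l div k) * k" by (metis add_less_mono1 add.commute mult_Suc)
    then show ?thesis using l_def s_def by simp
  qed
  have inv: "is_inverse_map n f g"
    unfolding is_inverse_map_def fP gP
    using Phi_vecs comp_gf[OF assms(4) m0 n0 assms(3) _ ls] comp_fg[OF assms(4) m0 n0 assms(3) _ ls]
    by auto
  have mln: "m * l < n"
  proof -
    have "m * l \<le> n" unfolding l_def by (simp add: mult.commute)
    moreover have "m * l \<noteq> n" using assms(3) by auto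
    ultimately show ?thesis by simp
  qed
  have "0 < l div k" by (subst div_greater_zero_iff) (use assms l_def in auto)
  then have s1: "1 \<le> s" unfolding s_def by simp
  have sk: "s * k \<le> l" unfolding s_def by (metis div_mult_mod_eq le_add1)
  have degf: "alg_degree n f = (m - 1) * k + 1"
  proof (rule alg_deg_const[OF n0], intro allI impI)
    fix i assume i: "i < n"
    have "(\<lambda>x. f x i) = (\<lambda>x. odd (card {j\<in>{0..1}. theta n m (j * k) x i}))"
      unfolding fP Phi_def map_sum_def by simp
    moreover have "m * (1 * k) < n" using mln assms l_def
      by (metis le_less_trans mult_le_mono2 mult_1)
    ultimately show "bool_fun_degree n (\<lambda>x. f x i) = (m - 1) * k + 1"
      using deg_main[OF m0 assms(4) _ _ i, of 1] by simp
  qed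
  have degg: "alg_degree n g = (m - 1) * s * k + 1"
  proof (rule alg_deg_const[OF n0], intro allI impI)
    fix i assume i: "i < n"
    have "(\<lambda>x. g x i) = (\<lambda>x. odd (card {j\<in>{0..s}. theta n m (j * k) x i}))"
      unfolding g_def map_sum_def by simp
    moreover have "m * (s * k) < n" using mln sk
      by (metis le_less_trans mult_le_mono2)
    ultimately show "bool_fun_degree n (\<lambda>x. g x i) = (m - 1) * s * k + 1"
      using deg_main[OF m0 assms(4) s1 _ i] by simp
  qed
  show ?thesis using O LT inv degf degg fP l_def by simp
qed

end
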